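(* Let $\mathcal{C}_1$ and $\mathcal{C}_2$ be hypergraphs on disjoint vertex sets $V_1$ and $V_2$. Let $\mathcal{C}(\operatorname{Ind}(\mathcal{C}_1)*\operatorname{Ind}(\mathcal{C}_2))$ be the hypergraph of minimal non-faces of the join $\operatorname{Ind}(\mathcal{C}_1)*\operatorname{Ind}(\mathcal{C}_2)$ (a complex on $V_1\cup V_2$; this hypergraph has edge set $\mathcal{C}_1\cup\mathcal{C}_2$). Then $\psi(\mathcal{C}(\operatorname{Ind}(\mathcal{C}_1)*\operatorname{Ind}(\mathcal{C}_2)))=\psi(\mathcal{C}_1)+\psi(\mathcal{C}_2)$ (with $\infty+a=\infty$).
   Context: A hypergraph $\mathcal{C}$ on a finite vertex set $V$ is a family of pairwise incomparable subsets of $V$ (its edges), each of cardinality at least $2$; vertices lying in no edge are allowed. The independence complex $\operatorname{Ind}(\mathcal{C})$ is the simplicial complex on $V$ whose faces are the subsets of $V$ containing no edge of $\mathcal{C}$. For a simplicial complex $\Delta$ on $V$ (containing all singletons), $\mathcal{C}(\Delta)$ is the hypergraph on $V$ of inclusion-minimal non-faces of $\Delta$; $\operatorname{Ind}(\mathcal{C}(\Delta))=\Delta$. For an edge $F$: $\mathcal{C}-F$ is the hypergraph on $V$ with edge set $\mathcal{C}\setminus\{F\}$; $N_{\mathcal{C}}(F)=\bigcup\{E\setminus F : E\in\mathcal{C},\ |E\setminus F|=1\}$; and $\mathcal{C}:F$ is the hypergraph on $V\setminus(F\cup N_{\mathcal{C}}(F))$ whose edges are the members of cardinality at least $2$ among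 the inclusion-minimal members of the family $\{E\setminus F : E\in \mathcal{C}-F\}$. The number $\psi(\mathcal{C})\in\mathbb{Z}_{\ge 0}\cup\{\infty\}$ is defined recursively: $\psi(\mathcal{C})=0$ if $V=\emptyset$; $\psi(\mathcal{C})=\infty$ if $V\neq\emptyset$ and $\mathcal{C}$ has no edges; otherwise $\psi(\mathcal{C})=\max_{F\in\mathcal{C}}\min\{\psi(\mathcal{C}-F),\ \psi(\mathcal{C}:F)+|F|-1\}$. *)

theory Defs
  imports Main "HOL-Library.Extended_Nat"
begin

definition hypergraph :: "'a set \<Rightarrow> 'a set set \<Rightarrow> bool" where
  "hypergraph V C \<longleftrightarrow> finite V \<and> (\<forall>E\<in>C. E \<subseteq> V \<and> 2 \<le> card E)
     \<and> (\<forall>E\<in>C. \<forall>E'\<in>C. E \<subseteq> E' \<longrightarrow> E = E')"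

definition Ind :: "'a set \<Rightarrow> 'a set set \<Rightarrow> 'a set set" where
  "Ind V C = {S. S \<subseteq> V \<and> \<not> (\<exists>E\<in>C. E \<subseteq> S)}"

definition join :: "'a set set \<Rightarrow> 'a set set \<Rightarrow> 'a set set" where
  "join D1 D2 = {S1 \<union> S2 | S1 S2. S1 \<in> D1 \<and> S2 \<in> D2}"

definition min_nonfaces :: "'a set \<Rightarrow> 'a set set \<Rightarrow> 'a set set" where
  "min_nonfaces V D = {S. S \<subseteq> V \<and> S \<notin> D \<and> (\<forall>T. T \<subset> S \<longrightarrow> T \<in> D)}"

definition nbhd :: "'a set set \<Rightarrow> 'a set \<Rightarrow> 'a set" where
  "nbhd C F = \<Union>{E - F | E. E \<in> C \<and> card (E - F) = 1}"

definition minimal_members :: "'a set set \<Rightarrow> 'a set set" where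
  "minimal_members S = {G \<in> S. \<not> (\<exists>H\<in>S. H \<subset> G)}"

text \<open>Edges of C:F (its vertex set is V - (F \<union> nbhd C F)).\<close>
definition colon :: "'a set set \<Rightarrow> 'a set \<Rightarrow> 'a set set" where
  "colon C F = {G \<in> minimal_members {E - F | E. E \<in> C - {F}}. 2 \<le> card G}"

function psi :: "'a set \<Rightarrow> 'a set set \<Rightarrow> enat" where
  "psi V C =
    (if \<not> (finite V \<and> (\<forall>E\<in>C. E \<subseteq> V \<and> E \<noteq> {})) then 0
     else if V = {} then 0
     else if C = {} then \<infinity>
     else Max ((\<lambda>F. min (psi V (C - {F}))
                         (psi (V - (F \<union> nbhd C F)) (colon C F) + enat (card F - 1))) ` C))"
  by pat_completeness auto
termination
proof (relation "measures [\<lambda>(V, C). card V, \<lambda>(V, C). card C]", goal_cases)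
  case 1 then show ?case by auto
next
  case (2 V C F)
  then have "C \<subseteq> Pow V" by auto
  with 2 have "finite C" by (meson finite_Pow_iff finite_subset)
  with 2 have "card (C - {F}) < card C" by (meson card_Diff1_less)
  then show ?case by simp
next
  case (3 V C F)
  then have "F \<subseteq> V" "F \<noteq> {}" by auto
  then have "V - (F \<union> nbhd C F) \<subset> V" by blast
  with 3 have "card (V - (F \<union> nbhd C F)) < card V" by (meson psubset_card_mono)
  then show ?case by simp
qed

end

theory Submission
  imports Defs
begin

declare psi.simps[simp del]

lemma hyp_finC: "hypergraph V C \<Longrightarrow> finite C"
  unfolding hypergraph_def by (meson Pow_iff finite_Pow_iff finite_subset subsetI)

lemma hyp_ne: "hypergraph V C \<Longrightarrow> E \<in> C \<Longrightarrow> E \<noteq> {}"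
  unfolding hypergraph_def by fastforce

lemma hyp_sub: "hypergraph V C \<Longrightarrow> E \<in> C \<Longrightarrow> E \<subseteq> V"
  unfolding hypergraph_def by fastforce

lemma hyp_card: "hypergraph V C \<Longrightarrow> E \<in> C \<Longrightarrow> 2 \<le> card E"
  unfolding hypergraph_def by fastforce

lemma hyp_anti: "hypergraph V C \<Longrightarrow> E \<in> C \<Longrightarrow> E' \<in> C \<Longrightarrow> E \<subseteq> E' \<Longrightarrow> E = E'"
  unfolding hypergraph_def by fastforce

lemma psi_eq: assumes "hypergraph V C"
  shows "psi V C = (if V = {} then 0 else if C = {} then \<infinity>
     else Max ((\<lambda>F. min (psi V (C - {F}))
                         (psi (V - (F \<union> nbhd C F)) (colon C F) + enat (card F - 1))) ` C))"
proof -
  have "finite V \<and> (\<forall>E\<in>C. E \<subseteq> V \<and> E \<noteq> {})"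
    using assms hyp_ne hyp_sub unfolding hypergraph_def by blast
  then show ?thesis by (subst psi.simps) simp
qed

lemma hyp_del: "hypergraph V C \<Longrightarrow> hypergraph V (C - {F})"
  unfolding hypergraph_def by blast

lemma colon_sub:
  assumes h: "hypergraph V C" and F: "F \<in> C" and G: "G \<in> colon C F"
  shows "G \<subseteq> V - (F \<union> nbhd C F)"
proof -
  from G obtain E where E: "E \<in> C - {F}" "G = E - F" and card: "2 \<le> card G"
    and mm: "\<not> (\<exists>H\<in>{E - F | E. E \<in> C - {F}}. H \<subset> G)"
    unfolding colon_def minimal_members_def by blast
  have "G \<subseteq> V - F" using E hyp_sub[OF h] by blast
  moreover have "G \<inter> nbhd C F = {}"
  proof (rule ccontr)
    assume "G \<inter> nbhd C F \<noteq> {}"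
    then obtain w E' where w: "w \<in> G" "w \<in> E' - F" "E' \<in> C" "card (E' - F) = 1"
      unfolding nbhd_def by blast
    then obtain u where u: "E' - F = {u}" by (meson card_1_singletonE)
    with w have "E' - F = {w}" by auto
    have "E' \<noteq> F" using w by auto
    hence "E' - F \<in> {E - F | E. E \<in> C - {F}}" using w by blast
    moreover have "G \<noteq> {w}" using card by auto
    hence "{w} \<subset> G" using w by blast
    ultimately show False using mm \<open>E' - F = {w}\<close> by auto
  qed
  ultimately show ?thesis by blast
qed

lemma hyp_colon:
  assumes h: "hypergraph V C" and F: "F \<in> C"
  shows "hypergraph (V - (F \<union> nbhd C F)) (colon C F)"
  unfolding hypergraph_def
proof (intro conjI ballI impI)
  show "finite (V - (F \<union> nbhd C F))" using h unfolding hypergraph_def by simp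
next
  fix E assume "E \<in> colon C F"
  then show "E \<subseteq> V - (F \<union> nbhd C F)" using colon_sub[OF h F] by blast
next
  fix E assume "E \<in> colon C F"
  then show "2 \<le> card E" unfolding colon_def by blast
next
  fix E E' assume "E \<in> colon C F" "E' \<in> colon C F" "E \<subseteq> E'"
  then show "E = E'" unfolding colon_def minimal_members_def by blast
qed

lemma card_colon:
  assumes h: "hypergraph V C"
  shows "card (colon C F) \<le> card C"
proof -
  have "colon C F \<subseteq> (\<lambda>E. E - F) ` C" unfolding colon_def minimal_members_def by blast
  hence "card (colon C F) \<le> card ((\<lambda>E. E - F) ` C)"
    using hyp_finC[OF h] by (simp add: card_mono)
  also have "\<dots> \<le> card C" using card_image_le hyp_finC[OF h] by blast
  finally show ?thesis .
qed

lemma Max_plus: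
  assumes "finite S" "S \<noteq> {}"
  shows "Max ((\<lambda>x. f x + k) ` S) = Max (f ` S) + (k::enat)"
proof -
  have "Max (f ` S) \<in> f ` S" using assms by simp
  then obtain x where x: "x \<in> S" "f x = Max (f ` S)" by auto
  show ?thesis
  proof (rule Max_eqI)
    show "finite ((\<lambda>x. f x + k) ` S)" using assms by simp
    show "Max (f ` S) + k \<in> (\<lambda>x. f x + k) ` S" using x by force
    fix y assume "y \<in> (\<lambda>x. f x + k) ` S"
    then obtain z where "z \<in> S" "y = f z + k" by blast
    moreover have "f z \<le> Max (f ` S)" using assms \<open>z \<in> S\<close> by simp
    ultimately show "y \<le> Max (f ` S) + k" by (simp add: add_right_mono)
  qed
qed

lemma min_plus: "min (x + b) (y + b + c) = min x (y + c) + (b::enat)"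
  by (cases x; cases y; cases b; cases c) (simp_all add: min_def)

definition TT :: "'a set \<Rightarrow> 'a set set \<Rightarrow> 'a set \<Rightarrow> enat" where
  "TT V C F = min (psi V (C - {F})) (psi (V - (F \<union> nbhd C F)) (colon C F) + enat (card F - 1))"

lemma step:
  fixes V1 V2 :: "'a set"
  assumes h1: "hypergraph V1 C1" and h2: "hypergraph V2 C2" and d: "V1 \<inter> V2 = {}"
    and F: "F \<in> C1"
    and IH: "\<And>(W1::'a set) D1 W2 D2. hypergraph W1 D1 \<Longrightarrow> hypergraph W2 D2 \<Longrightarrow> W1 \<inter> W2 = {} \<Longrightarrow>
       card W1 + card W2 + card D1 + card D2 < card V1 + card V2 + card C1 + card C2 \<Longrightarrow>
       psi (W1 \<union> W2) (D1 \<union> D2) = psi W1 D1 + psi W2 D2"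
  shows "TT (V1 \<union> V2) (C1 \<union> C2) F = TT V1 C1 F + psi V2 C2"
proof -
  have FV: "F \<subseteq> V1" "F \<noteq> {}" using F hyp_sub[OF h1] hyp_ne[OF h1] by auto
  have C2d: "E \<in> C2 \<Longrightarrow> E - F = E" for E using hyp_sub[OF h2] FV d by blast
  have e1: "(C1 \<union> C2) - {F} = (C1 - {F}) \<union> C2" using C2d FV by blast
  have "card (C1 - {F}) < card C1" using F hyp_finC[OF h1] by (meson card_Diff1_less)
  hence p1: "psi (V1 \<union> V2) ((C1 \<union> C2) - {F}) = psi V1 (C1 - {F}) + psi V2 C2"
    unfolding e1 using IH[of V1 "C1 - {F}" V2 C2] hyp_del[OF h1] h2 d by simp
  have nb: "nbhd (C1 \<union> C2) F = nbhd C1 F"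
  proof -
    have "E \<in> C2 \<Longrightarrow> card (E - F) \<noteq> 1" for E using C2d hyp_card[OF h2, of E] by auto
    then show ?thesis unfolding nbhd_def by blast
  qed
  have nbV: "nbhd C1 F \<subseteq> V1" unfolding nbhd_def using hyp_sub[OF h1] by blast
  have ev: "(V1 \<union> V2) - (F \<union> nbhd C1 F) = (V1 - (F \<union> nbhd C1 F)) \<union> V2"
    using nbV FV d by blast
  have fam: "{E - F | E. E \<in> (C1 \<union> C2) - {F}} = {E - F | E. E \<in> C1 - {F}} \<union> C2"
  proof -
    have a: "{E - F | E. E \<in> (C1 \<union> C2) - {F}} = {E - F | E. E \<in> C1 - {F}} \<union> (\<lambda>E. E - F) ` C2"
      unfolding e1 by blast
    have b: "(\<lambda>E. E - F) ` C2 = C2" proof -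
      have "(\<lambda>E. E - F) ` C2 = (\<lambda>E. E) ` C2" by (rule image_cong) (simp_all add: C2d)
      then show ?thesis by simp
    qed
    show ?thesis unfolding a b ..
  qed
  have neA: "G \<in> {E - F | E. E \<in> C1 - {F}} \<Longrightarrow> G \<noteq> {} \<and> G \<subseteq> V1" for G
  proof -
    assume "G \<in> {E - F | E. E \<in> C1 - {F}}"
    then obtain E where E: "E \<in> C1" "E \<noteq> F" "G = E - F" by blast
    have "\<not> E \<subseteq> F" using hyp_anti[OF h1 E(1) F] E(2) by blast
    then show ?thesis using E hyp_sub[OF h1 E(1)] by blast
  qed
  have mmU: "minimal_members ({E - F | E. E \<in> C1 - {F}} \<union> C2)
      = minimal_members {E - F | E. E \<in> C1 - {F}} \<union> C2"
  proof -
    have x1: "\<And>A B. A \<in> {E - F | E. E \<in> C1 - {F}} \<Longrightarrow> B \<in> C2 \<Longrightarrow> \<not> A \<subset> B \<and> \<not> B \<subset> A"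
    proof -
      fix A B assume a: "A \<in> {E - F | E. E \<in> C1 - {F}}" and b: "B \<in> C2"
      have "A \<noteq> {}" "A \<subseteq> V1" using neA[OF a] by auto
      moreover have "B \<noteq> {}" "B \<subseteq> V2" using hyp_ne[OF h2 b] hyp_sub[OF h2 b] by auto
      ultimately show "\<not> A \<subset> B \<and> \<not> B \<subset> A" using d by blast
    qed
    have x2: "\<And>A B. A \<in> C2 \<Longrightarrow> B \<in> C2 \<Longrightarrow> \<not> A \<subset> B" using hyp_anti[OF h2] by blast
    let ?A = "{E - F | E. E \<in> C1 - {F}}"
    show ?thesis
    proof (rule set_eqI)
      fix G
      show "G \<in> minimal_members (?A \<union> C2) \<longleftrightarrow> G \<in> minimal_members ?A \<union> C2"
      proof (cases "G \<in> C2")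
        case True
        have "\<not> (\<exists>H\<in>?A \<union> C2. H \<subset> G)"
        proof
          assume "\<exists>H\<in>?A \<union> C2. H \<subset> G"
          then obtain H where H: "H \<in> ?A \<union> C2" "H \<subset> G" by blast
          show False
          proof (cases "H \<in> C2")
            case True then show False using x2 H(2) \<open>G \<in> C2\<close> by blast
          next
            case False then have "H \<in> ?A" using H(1) by blast
            then show False using x1 H(2) \<open>G \<in> C2\<close> by blast
          qed
        qed
        then show ?thesis unfolding minimal_members_def using True by blast
      next
        case False
        have "(\<exists>H\<in>?A \<union> C2. H \<subset> G) \<longleftrightarrow> (\<exists>H\<in>?A. H \<subset> G)" if "G \<in> ?A"
        proof -
          have "\<not> (\<exists>H\<in>C2. H \<subset> G)" using x1 that by blast
          then show ?thesis by blast
        qed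
        then show ?thesis unfolding minimal_members_def using False by blast
      qed
    qed
  qed
  have col: "colon (C1 \<union> C2) F = colon C1 F \<union> C2"
    unfolding colon_def fam mmU using hyp_card[OF h2] by blast
  have "V1 - (F \<union> nbhd C1 F) \<subset> V1" using FV by blast
  hence "card (V1 - (F \<union> nbhd C1 F)) < card V1"
    using h1 unfolding hypergraph_def by (meson psubset_card_mono)
  moreover have "card (colon C1 F) \<le> card C1" using card_colon[OF h1] .
  ultimately have p2: "psi ((V1 \<union> V2) - (F \<union> nbhd (C1 \<union> C2) F)) (colon (C1 \<union> C2) F)
      = psi (V1 - (F \<union> nbhd C1 F)) (colon C1 F) + psi V2 C2"
    unfolding nb ev col
    using IH[of "V1 - (F \<union> nbhd C1 F)" "colon C1 F" V2 C2] hyp_colon[OF h1 F] h2 d by force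
  show ?thesis unfolding TT_def p1 p2 by (simp only: min_plus)
qed

lemma psiTT: "hypergraph V C \<Longrightarrow> C \<noteq> {} \<Longrightarrow> psi V C = Max (TT V C ` C)"
proof -
  assume h: "hypergraph V C" and c: "C \<noteq> {}"
  then obtain E where "E \<in> C" by blast
  hence "V \<noteq> {}" using hyp_ne[OF h] hyp_sub[OF h] by blast
  then show ?thesis using psi_eq[OF h] c unfolding TT_def by simp
qed

lemma psi_empty: "hypergraph V {} \<Longrightarrow> psi V {} = (if V = {} then 0 else \<infinity>)"
  using psi_eq[of V "{}"] by simp

lemma hyp_union:
  assumes h1: "hypergraph V1 C1" and h2: "hypergraph V2 C2" and d: "V1 \<inter> V2 = {}"
  shows "hypergraph (V1 \<union> V2) (C1 \<union> C2)"
  unfolding hypergraph_def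
proof (intro conjI ballI impI)
  show "finite (V1 \<union> V2)" using h1 h2 unfolding hypergraph_def by simp
next
  fix E assume "E \<in> C1 \<union> C2"
  then show "E \<subseteq> V1 \<union> V2" "2 \<le> card E" using hyp_sub[OF h1] hyp_sub[OF h2]
    hyp_card[OF h1] hyp_card[OF h2] by auto
next
  fix E E' assume a: "E \<in> C1 \<union> C2" "E' \<in> C1 \<union> C2" "E \<subseteq> E'"
  show "E = E'"
  proof -
    have ne: "E \<noteq> {}" using a hyp_ne[OF h1] hyp_ne[OF h2] by blast
    { assume "E \<in> C1" "E' \<in> C2"
      hence False using a ne hyp_sub[OF h1, of E] hyp_sub[OF h2, of E'] d by blast }
    moreover
    { assume "E \<in> C2" "E' \<in> C1"
      hence False using a ne hyp_sub[OF h2, of E] hyp_sub[OF h1, of E'] d by blast }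
    ultimately show ?thesis using a hyp_anti[OF h1, of E E'] hyp_anti[OF h2, of E E'] by blast
  qed
qed

lemma main:
  fixes V1 V2 :: "'a set"
  shows "hypergraph V1 C1 \<Longrightarrow> hypergraph V2 C2 \<Longrightarrow> V1 \<inter> V2 = {} \<Longrightarrow>
   psi (V1 \<union> V2) (C1 \<union> C2) = psi V1 C1 + psi V2 C2"
proof (induction "card V1 + card V2 + card C1 + card C2" arbitrary: V1 V2 C1 C2 rule: less_induct)
  case less
  note h1 = less.prems(1) and h2 = less.prems(2) and d = less.prems(3)
  have IH: "\<And>(W1::'a set) D1 W2 D2. hypergraph W1 D1 \<Longrightarrow> hypergraph W2 D2 \<Longrightarrow> W1 \<inter> W2 = {} \<Longrightarrow>
       card W1 + card W2 + card D1 + card D2 < card V1 + card V2 + card C1 + card C2 \<Longrightarrow>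
       psi (W1 \<union> W2) (D1 \<union> D2) = psi W1 D1 + psi W2 D2"
    apply (rule less.hyps) apply assumption+ done
  have IH': "\<And>(W1::'a set) D1 W2 D2. hypergraph W1 D1 \<Longrightarrow> hypergraph W2 D2 \<Longrightarrow> W1 \<inter> W2 = {} \<Longrightarrow>
       card W1 + card W2 + card D1 + card D2 < card V2 + card V1 + card C2 + card C1 \<Longrightarrow>
       psi (W1 \<union> W2) (D1 \<union> D2) = psi W1 D1 + psi W2 D2"
    using IH by (simp add: add.commute add.left_commute)
  have d': "V2 \<inter> V1 = {}" using d by blast
  have hU: "hypergraph (V1 \<union> V2) (C1 \<union> C2)" using hyp_union[OF h1 h2 d] .
  have s1: "F \<in> C1 \<Longrightarrow> TT (V1 \<union> V2) (C1 \<union> C2) F = TT V1 C1 F + psi V2 C2" for F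
    using step[OF h1 h2 d _ IH] by blast
  have s2: "F \<in> C2 \<Longrightarrow> TT (V1 \<union> V2) (C1 \<union> C2) F = TT V2 C2 F + psi V1 C1" for F
    using step[OF h2 h1 d' _ IH'] by (simp add: Un_commute)
  show ?case
  proof (cases "C1 = {}")
    case True
    note c1 = True
    show ?thesis
    proof (cases "C2 = {}")
      case True
      have "psi V1 C1 = (if V1 = {} then 0 else \<infinity>)" using psi_empty h1 c1 by blast
      moreover have "psi V2 C2 = (if V2 = {} then 0 else \<infinity>)" using psi_empty h2 True by blast
      moreover have "psi (V1 \<union> V2) (C1 \<union> C2) = (if V1 \<union> V2 = {} then 0 else \<infinity>)"
        using psi_empty hU True c1 by (metis Un_empty)
      ultimately show ?thesis by simp
    next
      case False
      have "psi (V1 \<union> V2) (C1 \<union> C2) = Max (TT (V1 \<union> V2) (C1 \<union> C2) ` C2)"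
        using psiTT[OF hU] c1 False by simp
      also have "\<dots> = Max ((\<lambda>F. TT V2 C2 F + psi V1 C1) ` C2)"
        by (rule arg_cong[where f=Max], rule image_cong) (simp_all add: s2)
      also have "\<dots> = Max (TT V2 C2 ` C2) + psi V1 C1"
        using Max_plus hyp_finC[OF h2] False by blast
      also have "\<dots> = psi V1 C1 + psi V2 C2" using psiTT[OF h2 False] by (simp add: add.commute)
      finally show ?thesis .
    qed
  next
    case False
    note c1 = False
    have m1: "Max (TT (V1 \<union> V2) (C1 \<union> C2) ` C1) = psi V1 C1 + psi V2 C2"
    proof -
      have "Max (TT (V1 \<union> V2) (C1 \<union> C2) ` C1) = Max ((\<lambda>F. TT V1 C1 F + psi V2 C2) ` C1)"
        by (rule arg_cong[where f=Max], rule image_cong) (simp_all add: s1)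
      also have "\<dots> = Max (TT V1 C1 ` C1) + psi V2 C2"
        using Max_plus hyp_finC[OF h1] c1 by blast
      also have "\<dots> = psi V1 C1 + psi V2 C2" using psiTT[OF h1 c1] by simp
      finally show ?thesis .
    qed
    show ?thesis
    proof (cases "C2 = {}")
      case True
      then show ?thesis using psiTT[OF hU] c1 m1 by simp
    next
      case False
      have m2: "Max (TT (V1 \<union> V2) (C1 \<union> C2) ` C2) = psi V1 C1 + psi V2 C2"
      proof -
        have "Max (TT (V1 \<union> V2) (C1 \<union> C2) ` C2) = Max ((\<lambda>F. TT V2 C2 F + psi V1 C1) ` C2)"
          by (rule arg_cong[where f=Max], rule image_cong) (simp_all add: s2)
        also have "\<dots> = Max (TT V2 C2 ` C2) + psi V1 C1"
          using Max_plus hyp_finC[OF h2] False by blast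
        also have "\<dots> = psi V1 C1 + psi V2 C2" using psiTT[OF h2 False] by (simp add: add.commute)
        finally show ?thesis .
      qed
      have "psi (V1 \<union> V2) (C1 \<union> C2) = Max (TT (V1 \<union> V2) (C1 \<union> C2) ` (C1 \<union> C2))"
        using psiTT[OF hU] c1 by simp
      also have "\<dots> = max (Max (TT (V1 \<union> V2) (C1 \<union> C2) ` C1)) (Max (TT (V1 \<union> V2) (C1 \<union> C2) ` C2))"
        unfolding image_Un using c1 False hyp_finC[OF h1] hyp_finC[OF h2]
        by (simp add: Max_Un)
      finally show ?thesis using m1 m2 by simp
    qed
  qed
qed

lemma join_Ind:
  assumes h1: "hypergraph V1 C1" and h2: "hypergraph V2 C2" and d: "V1 \<inter> V2 = {}"
  shows "join (Ind V1 C1) (Ind V2 C2) = Ind (V1 \<union> V2) (C1 \<union> C2)"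
proof
  show "join (Ind V1 C1) (Ind V2 C2) \<subseteq> Ind (V1 \<union> V2) (C1 \<union> C2)"
  proof
    fix S assume "S \<in> join (Ind V1 C1) (Ind V2 C2)"
    then obtain S1 S2 where S: "S = S1 \<union> S2" "S1 \<subseteq> V1" "S2 \<subseteq> V2"
      "\<not> (\<exists>E\<in>C1. E \<subseteq> S1)" "\<not> (\<exists>E\<in>C2. E \<subseteq> S2)"
      unfolding join_def Ind_def by blast
    have "\<not> (\<exists>E\<in>C1. E \<subseteq> S)"
    proof
      assume "\<exists>E\<in>C1. E \<subseteq> S"
      then obtain E where "E \<in> C1" "E \<subseteq> S" by blast
      moreover have "E \<subseteq> V1" using hyp_sub[OF h1 \<open>E \<in> C1\<close>] .
      ultimately have "E \<subseteq> S1" using S d by blast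
      then show False using S \<open>E \<in> C1\<close> by blast
    qed
    moreover have "\<not> (\<exists>E\<in>C2. E \<subseteq> S)"
    proof
      assume "\<exists>E\<in>C2. E \<subseteq> S"
      then obtain E where "E \<in> C2" "E \<subseteq> S" by blast
      moreover have "E \<subseteq> V2" using hyp_sub[OF h2 \<open>E \<in> C2\<close>] .
      ultimately have "E \<subseteq> S2" using S d by blast
      then show False using S \<open>E \<in> C2\<close> by blast
    qed
    ultimately show "S \<in> Ind (V1 \<union> V2) (C1 \<union> C2)" using S unfolding Ind_def by blast
  qed
next
  show "Ind (V1 \<union> V2) (C1 \<union> C2) \<subseteq> join (Ind V1 C1) (Ind V2 C2)"
  proof
    fix S assume S: "S \<in> Ind (V1 \<union> V2) (C1 \<union> C2)"
    have "S \<inter> V1 \<in> Ind V1 C1" "S \<inter> V2 \<in> Ind V2 C2" using S unfolding Ind_def by blast+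
    moreover have "S = (S \<inter> V1) \<union> (S \<inter> V2)" using S unfolding Ind_def by blast
    ultimately show "S \<in> join (Ind V1 C1) (Ind V2 C2)" unfolding join_def by blast
  qed
qed

lemma min_nonfaces_Ind:
  assumes h: "hypergraph V C"
  shows "min_nonfaces V (Ind V C) = C"
proof
  show "min_nonfaces V (Ind V C) \<subseteq> C"
  proof
    fix S assume S: "S \<in> min_nonfaces V (Ind V C)"
    then obtain E where E: "E \<in> C" "E \<subseteq> S" unfolding min_nonfaces_def Ind_def by blast
    show "S \<in> C"
    proof (cases "E = S")
      case True then show ?thesis using E by simp
    next
      case False
      hence "E \<in> Ind V C" using S E unfolding min_nonfaces_def by blast
      then show ?thesis using E unfolding Ind_def by blast
    qed
  qed
next
  show "C \<subseteq> min_nonfaces V (Ind V C)"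
  proof
    fix S assume S: "S \<in> C"
    have "\<forall>T. T \<subset> S \<longrightarrow> T \<in> Ind V C"
      using S hyp_sub[OF h S] hyp_anti[OF h _ S] unfolding Ind_def by blast
    then show "S \<in> min_nonfaces V (Ind V C)"
      using S hyp_sub[OF h S] unfolding min_nonfaces_def Ind_def by blast
  qed
qed

theorem proposition3p5:
  fixes V1 V2 :: "'a set" and C1 C2 :: "'a set set"
  assumes "hypergraph V1 C1" and "hypergraph V2 C2" and "V1 \<inter> V2 = {}"
  shows "psi (V1 \<union> V2) (min_nonfaces (V1 \<union> V2) (join (Ind V1 C1) (Ind V2 C2)))
         = psi V1 C1 + psi V2 C2"
  using join_Ind[OF assms] min_nonfaces_Ind[OF hyp_union[OF assms]] main[OF assms] by simp

end
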